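(* Let $K,L,N$ be positive integers and $t$ an integer with $L=K-t$, and consider a $(K,L,M,N)$ multi-antenna coded caching system with $\frac{M}{N}=\frac{t}{K}$. Then the delivery time $$T^*=\frac{K-t}{t+L}=\frac{L}{K}$$ is achievable by a scheme with subpacketization number $\frac{K}{\gcd(K,t,L)}$.
   Context: $(K,L,M,N)$ multi-antenna coded caching system: a server holds $N$ files $W_1,\dots,W_N$, each of size one unit, and has $L$ transmit antennas; it serves $K$ single-antenna users over a MISO broadcast channel of capacity one file per unit time. User $k$ has a cache of size $M$ units ($0\le M\le N$). In the placement phase (before demands are known) the server fills caches with uncoded file content. In the delivery phase each user $k$ requests a file $W_{d_k}$; the server sends vectors $\mathbf{x}(\tau)\in\mathbb{C}^L$ and user $k$ receives $y_k(\tau)=\mathbf{h}_k^T\mathbf{x}(\tau)+w_k(\tau)$ with $\mathbf{h}_k\in\mathbb{C}^L$ its channel vector; all nodes have perfect channel knowledge, the channel vectors are generic, and the high-SNR regime is considered (noise neglected). A scheme is correct if every user recovers its requested file from its cache and received signals, for every demand vector. The subpacketization number is the number of equal-size subfiles into which each file is split; if each file is split into $F$ subfiles and the delivery consists of $S'$ transmissions each of size $1/F$ file, the delivery time is $T=S'/F$. "Achievable" means such a correct scheme exists for every demand vector with that delivery time. *)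

theory Defs
  imports Complex_Main
begin

text \<open>Users are indexed by k < K, antennas by i < L, files by n < N,
subfiles of each file by j < F. A subfile is identified with the pair (n, j)
and modelled as a complex symbol (a block of symbols coded identically).
The channel of user k is h k :: nat \<Rightarrow> complex (entries i < L);
user k receives y_k = sum_i h k i * x i.\<close>

definition chan_generic :: "nat \<Rightarrow> nat \<Rightarrow> (nat \<Rightarrow> nat \<Rightarrow> complex) \<Rightarrow> bool" where
  "chan_generic K L h \<longleftrightarrow>
     (\<forall>S. S \<subseteq> {..<K} \<longrightarrow> card S \<le> L \<longrightarrow>
        (\<forall>c :: nat \<Rightarrow> complex. (\<forall>i<L. (\<Sum>k\<in>S. c k * h k i) = 0) \<longrightarrow> (\<forall>k\<in>S. c k = 0)))"

text \<open>Uncoded placement: Z k is the set of subfiles (n, j) cached by user k;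
each subfile has size 1/F, the cache size is M.\<close>
definition valid_placement :: "nat \<Rightarrow> nat \<Rightarrow> real \<Rightarrow> nat \<Rightarrow> (nat \<Rightarrow> (nat \<times> nat) set) \<Rightarrow> bool" where
  "valid_placement K N M F Z \<longleftrightarrow>
     (\<forall>k<K. Z k \<subseteq> {..<N} \<times> {..<F} \<and> real (card (Z k)) \<le> M * real F)"

text \<open>Linear delivery with S' transmissions: transmission tau is
x(tau) = sum over (n,j) of V tau (n,j) * W(n,j), with V tau (n,j) in C^L.
User k decodes each requested subfile (d k, j) not in its cache as a linear
combination of its received signals, after removing the contributions of its
cached subfiles (which it knows), for all values of the subfiles.\<close>
definition decodes :: "nat \<Rightarrow> nat \<Rightarrow> nat \<Rightarrow> nat \<Rightarrow> (nat \<Rightarrow> (nat \<times> nat) set)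
    \<Rightarrow> (nat \<Rightarrow> nat \<Rightarrow> complex) \<Rightarrow> (nat \<Rightarrow> nat) \<Rightarrow> nat
    \<Rightarrow> (nat \<Rightarrow> nat \<times> nat \<Rightarrow> nat \<Rightarrow> complex) \<Rightarrow> bool" where
  "decodes K L N F Z h d S' V \<longleftrightarrow>
     (\<forall>k<K. \<forall>j<F. (d k, j) \<notin> Z k \<longrightarrow>
        (\<exists>c :: nat \<Rightarrow> complex. \<forall>n<N. \<forall>j'<F. (n, j') \<notin> Z k \<longrightarrow>
           (\<Sum>\<tau><S'. c \<tau> * (\<Sum>i<L. h k i * V \<tau> (n, j') i))
             = (if n = d k \<and> j' = j then 1 else 0)))"

text \<open>Delivery time T is achievable with subpacketization F in the
(K,L,M,N) system: there is a placement (fixed before demands and channels)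
such that for every generic channel and every demand vector there is a
correct delivery of S' transmissions (each of size 1/F) with S'/F = T.\<close>
definition achievable_with_subpacketization ::
    "nat \<Rightarrow> nat \<Rightarrow> real \<Rightarrow> nat \<Rightarrow> nat \<Rightarrow> real \<Rightarrow> bool" where
  "achievable_with_subpacketization K L M N F T \<longleftrightarrow> F > 0 \<and>
     (\<exists>Z. valid_placement K N M F Z \<and>
        (\<forall>h. chan_generic K L h \<longrightarrow>
          (\<forall>d. (\<forall>k<K. d k < N) \<longrightarrow>
             (\<exists>S' V. real S' / real F = T \<and> decodes K L N F Z h d S' V))))"

end

theory Submission
  imports Defs "Jordan_Normal_Form.Determinant"
begin

lemma solve_square:
  fixes H :: "nat \<Rightarrow> nat \<Rightarrow> complex" and y :: "nat \<Rightarrow> complex"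
  assumes indep: "\<And>c. (\<forall>i<L. (\<Sum>p<L. c p * H p i) = 0) \<Longrightarrow> (\<forall>p<L. c p = 0)"
  shows "\<exists>v. \<forall>p<L. (\<Sum>i<L. H p i * v i) = y p"
proof -
  define A where "A = mat L L (\<lambda>(p,i). H p i)"
  have A: "A \<in> carrier_mat L L" unfolding A_def by simp
  have detA: "det A \<noteq> 0"
  proof
    assume "det A = 0"
    hence "det (transpose_mat A) = 0" using det_transpose[OF A] by simp
    then obtain w where w: "w \<in> carrier_vec L" "w \<noteq> 0\<^sub>v L" "transpose_mat A *\<^sub>v w = 0\<^sub>v L"
      using det_0_iff_vec_prod_zero[of "transpose_mat A" L] A by auto
    have "\<forall>i<L. (\<Sum>p<L. w $ p * H p i) = 0"
    proof (intro allI impI)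
      fix i assume i: "i < L"
      have "(transpose_mat A *\<^sub>v w) $ i = 0" using w(3) i by simp
      hence "row (transpose_mat A) i \<bullet> w = 0" using i A by simp
      thus "(\<Sum>p<L. w $ p * H p i) = 0" using i w(1)
        by (simp add: scalar_prod_def A_def lessThan_atLeast0 mult.commute)
    qed
    from indep[OF this] have "w = 0\<^sub>v L" using w(1) by (intro eq_vecI) auto
    with w(2) show False by simp
  qed
  define yv where "yv = vec L y"
  define x where "x = inverse (det A) \<cdot>\<^sub>v (adj_mat A *\<^sub>v yv)"
  have yv: "yv \<in> carrier_vec L" unfolding yv_def by simp
  have adj: "adj_mat A \<in> carrier_mat L L" "A * adj_mat A = det A \<cdot>\<^sub>m 1\<^sub>m L" using adj_mat[OF A] by auto
  have "A *\<^sub>v x = inverse (det A) \<cdot>\<^sub>v (A *\<^sub>v (adj_mat A *\<^sub>v yv))"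
    unfolding x_def using A adj yv by (intro mult_mat_vec) auto
  also have "A *\<^sub>v (adj_mat A *\<^sub>v yv) = (A * adj_mat A) *\<^sub>v yv"
    by (rule assoc_mult_mat_vec[OF A adj(1) yv, symmetric])
  also have "\<dots> = det A \<cdot>\<^sub>v yv" unfolding adj(2) using yv
    by (intro eq_vecI) (auto simp: scalar_prod_def if_distrib[of "\<lambda>z. det A * z"] if_distrib[of "\<lambda>z. z * yv $ _"] sum.delta cong: if_cong)
  finally have Ax: "A *\<^sub>v x = yv" using detA yv by (intro eq_vecI) auto
  show ?thesis
  proof (intro exI allI impI)
    fix p assume p: "p < L"
    have "(A *\<^sub>v x) $ p = y p" using Ax p yv_def by simp
    moreover have "x \<in> carrier_vec L" unfolding x_def using adj yv by simp
    ultimately show "(\<Sum>i<L. H p i * x $ i) = y p" using p A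
      by (simp add: A_def scalar_prod_def lessThan_atLeast0)
  qed
qed


lemma canc: "(r1::nat) < a \<Longrightarrow> r2 < a \<Longrightarrow> (x + r1) mod a = (x + r2) mod a \<Longrightarrow> r1 = r2"
proof -
  assume a: "r1 < a" "r2 < a" "(x + r1) mod a = (x + r2) mod a"
  have "int a dvd (int x + int r1) - (int x + int r2)"
    using a(3) by (metis mod_eq_dvd_iff of_nat_add of_nat_mod)
  hence "int a dvd int r1 - int r2" by simp
  then obtain q where q: "int r1 - int r2 = int a * q" by (auto elim: dvdE)
  have "q = 0"
  proof (rule ccontr)
    assume "q \<noteq> 0"
    hence "q \<ge> 1 \<or> q \<le> -1" by linarith
    thus False
    proof
      assume "q \<ge> 1"
      hence "int a * q \<ge> int a * 1" by (intro mult_left_mono) auto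
      thus False using q a by linarith
    next
      assume "q \<le> -1"
      hence "int a * q \<le> int a * (-1)" by (intro mult_left_mono) auto
      thus False using q a by linarith
    qed
  qed
  thus ?thesis using q by simp
qed

lemma phi_back: "(r::nat) < a \<Longrightarrow> ((j + a - r) mod a + r) mod a = j mod a"
proof -
  assume "r < a"
  hence "j + a - r + r = j + a" by simp
  hence "((j + a - r) mod a + r) mod a = (j + a) mod a" by (metis mod_add_left_eq)
  thus ?thesis by simp
qed

lemma phi_inj_r:
  fixes r1 r2 a j :: nat
  assumes h: "r1 < a" "r2 < a" "(j + a - r1) mod a = (j + a - r2) mod a"
  shows "r1 = r2"
proof -
  have 1: "((j + a - r1) mod a + r1) mod a = j mod a" using phi_back h(1) by blast
  have 2: "((j + a - r1) mod a + r2) mod a = j mod a" using phi_back[OF h(2), of j] h(3) by simp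
  show ?thesis using canc[OF h(1,2)] 1 2 by metis
qed

lemma phi_inj_j:
  fixes j1 j2 a r :: nat
  assumes "j1 < a" "j2 < a" "r < a" "(j1 + a - r) mod a = (j2 + a - r) mod a"
  shows "j1 = j2"
proof -
  have "j1 = j1 mod a" using assms(1) by simp
  also have "\<dots> = ((j1 + a - r) mod a + r) mod a" using phi_back[OF assms(3), of j1] by (rule sym)
  also have "\<dots> = ((j2 + a - r) mod a + r) mod a" using assms(4) by (rule arg_cong)
  also have "\<dots> = j2 mod a" using phi_back[OF assms(3), of j2] .
  also have "\<dots> = j2" using assms(2) by simp
  finally show ?thesis .
qed

lemma extend_subset:
  assumes "finite A" "S \<subseteq> A" "card S \<le> n" "n \<le> card A"
  shows "\<exists>S'. S \<subseteq> S' \<and> S' \<subseteq> A \<and> card S' = n"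
proof -
  have fS: "finite S" using assms(1,2) finite_subset by blast
  have "card (A - S) = card A - card S" using assms(1,2) fS by (simp add: card_Diff_subset)
  hence "n - card S \<le> card (A - S)" using assms(3,4) by simp
  then obtain B where B: "B \<subseteq> A - S" "card B = n - card S"
    using obtain_subset_with_card_n by metis
  have fB: "finite B" using B(1) assms(1) finite_subset by blast
  have "card (S \<union> B) = card S + card B" using B(1) fS fB by (intro card_Un_disjoint) auto
  thus ?thesis using B assms(2,3) by (intro exI[of _ "S \<union> B"]) auto
qed

lemma gen_solve:
  assumes gen: "chan_generic K L h" and S: "S \<subseteq> {..<K}" "card S \<le> L" and LK: "L \<le> K"
  shows "\<exists>v. \<forall>k\<in>S. (\<Sum>i<L. h k i * v i) = y k"
proof -
  obtain S' where S': "S \<subseteq> S'" "S' \<subseteq> {..<K}" "card S' = L"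
    using extend_subset[of "{..<K}" S L] S LK by auto
  have fin: "finite S'" using S'(2) finite_subset by blast
  obtain e where e: "bij_betw e {0..<L} S'" using ex_bij_betw_nat_finite[OF fin] S'(3) by auto
  have e': "bij_betw e {..<L} S'" using e by (simp add: lessThan_atLeast0)
  have "\<exists>v. \<forall>p<L. (\<Sum>i<L. h (e p) i * v i) = y (e p)"
  proof (rule solve_square)
    fix c assume c: "\<forall>i<L. (\<Sum>p<L. c p * h (e p) i) = 0"
    define c' where "c' = (\<lambda>k. c (inv_into {..<L} e k))"
    have "\<forall>i<L. (\<Sum>k\<in>S'. c' k * h k i) = 0"
    proof (intro allI impI)
      fix i assume i: "i < L"
      have "(\<Sum>k\<in>S'. c' k * h k i) = (\<Sum>p<L. c' (e p) * h (e p) i)"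
        using sum.reindex_bij_betw[OF e', of "\<lambda>k. c' k * h k i"] by simp
      also have "\<dots> = (\<Sum>p<L. c p * h (e p) i)"
        by (intro sum.cong refl) (simp add: c'_def bij_betw_inv_into_left[OF e'])
      finally show "(\<Sum>k\<in>S'. c' k * h k i) = 0" using c i by simp
    qed
    hence "\<forall>k\<in>S'. c' k = 0" using gen S' unfolding chan_generic_def by blast
    thus "\<forall>p<L. c p = 0" using bij_betw_inv_into_left[OF e'] bij_betw_apply[OF e'] c'_def
      by (metis lessThan_iff)
  qed
  then obtain v where v: "\<forall>p<L. (\<Sum>i<L. h (e p) i * v i) = y (e p)" by blast
  show ?thesis
  proof (intro exI ballI)
    fix k assume "k \<in> S"
    then have "k \<in> S'" using S' by auto
    then obtain p where "p < L" "e p = k" using bij_betw_imp_surj_on[OF e'] by auto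
    thus "(\<Sum>i<L. h k i * v i) = y k" using v by auto
  qed
qed

theorem theorem2:
  fixes K L N :: nat and t :: int and M :: real
  assumes "K > 0" and "L > 0" and "N > 0"
    and "int L = int K - t"
    and "0 \<le> M" and "M \<le> real N"
    and "M / real N = real_of_int t / real K"
  shows "achievable_with_subpacketization K L M N
            (nat (int K div gcd (gcd (int K) t) (int L)))
            (real_of_int (int K - t) / real_of_int (t + int L))
         \<and> real_of_int (int K - t) / real_of_int (t + int L) = real L / real K"
proof -
  have tnn: "t \<ge> 0"
  proof -
    have "M / real N \<ge> 0" using assms(5) by simp
    hence "real_of_int t / real K \<ge> 0" using assms(7) by simp
    thus ?thesis using assms(1) by (simp add: zero_le_divide_iff)
  qed
  have LK: "L \<le> K" using assms(4) tnn by linarith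
  define G where "G = gcd (gcd (int K) t) (int L)"
  have Gpos: "G > 0" using assms(1) unfolding G_def by simp
  define g where "g = nat G"
  have Gg: "G = int g" using Gpos g_def by simp
  have "G dvd int K" unfolding G_def by (meson dvd_trans gcd_dvd1)
  hence gK: "g dvd K" using Gg by simp
  have "G dvd int L" unfolding G_def by simp
  hence gL: "g dvd L" using Gg by simp
  define a where "a = K div g"
  define b where "b = L div g"
  have Ka: "K = g * a" using gK a_def by simp
  have Lb: "L = g * b" using gL b_def by simp
  have gpos: "g > 0" using Gpos g_def by simp
  have apos: "a > 0" using Ka assms(1) by (cases a) auto
  have bpos: "b > 0" using Lb assms(2) by (cases b) auto
  have ba: "b \<le> a" using LK Ka Lb gpos by simp
  have Fa: "nat (int K div G) = a" unfolding Gg a_def by (simp flip: zdiv_int)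
  have Tval: "real_of_int (int K - t) / real_of_int (t + int L) = real L / real K"
  proof -
    have "int K - t = int L" "t + int L = int K" using assms(4) by linarith+
    thus ?thesis by simp
  qed
  have ratio: "real b / real a = real L / real K" using Ka Lb gpos by simp
  have Ma: "M * real a = real N * real (a - b)"
  proof -
    have M: "M = real N * real_of_int t / real K" using assms(7) assms(3)
      by (simp add: field_simps)
    have "t = int K - int L" using assms(4) by linarith
    hence rt: "real_of_int t = real K - real L" by simp
    have rK: "real K = real g * real a" using Ka by (metis of_nat_mult)
    have rL: "real L = real g * real b" using Lb by (metis of_nat_mult)
    have tt: "real_of_int t = real g * real a - real g * real b"
      using rt rK rL by linarith
    show ?thesis unfolding M tt using Ka gpos apos ba by (simp add: field_simps of_nat_diff)
  qed
  define phi where "phi = (\<lambda>r j. (j + a - r) mod a)"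
  define mem where "mem = (\<lambda>j k. phi (k div g) j < b)"
  define Z where "Z = (\<lambda>k. {(n,j). n < N \<and> j < a \<and> \<not> mem j k})"
  define U where "U = (\<lambda>j. {k. k < K \<and> mem j k})"
  have divlt: "k div g < a" if "k < K" for k
    using that Ka gpos by (simp add: div_less_iff_less_mult mult.commute)
  have phi_lt: "phi r j < a" for r j using apos phi_def by simp
  have inj_phi: "inj_on (phi r) {..<a}" if "r < a" for r
    using phi_inj_j[OF _ _ that] unfolding phi_def inj_on_def by blast
  have card_Z: "card (Z k) = N * (a - b)" if k: "k < K" for k
  proof -
    define r where "r = k div g"
    have r: "r < a" using divlt k r_def by simp
    define A where "A = {j. j < a \<and> b \<le> phi r j}"
    have ZA: "Z k = {..<N} \<times> A" unfolding Z_def A_def mem_def r_def by auto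
    have surj: "phi r ` {..<a} = {..<a}"
      using endo_inj_surj[of "{..<a}" "phi r"] inj_phi[OF r] phi_lt by auto
    have "phi r ` A = {b..<a}"
    proof
      show "phi r ` A \<subseteq> {b..<a}" unfolding A_def using phi_lt by auto
      show "{b..<a} \<subseteq> phi r ` A"
      proof
        fix x assume x: "x \<in> {b..<a}"
        then obtain j where "j < a" "phi r j = x" using surj by (metis atLeastLessThan_iff imageE lessThan_iff)
        thus "x \<in> phi r ` A" using x unfolding A_def by auto
      qed
    qed
    moreover have "inj_on (phi r) A" using inj_phi[OF r] unfolding A_def
      by (rule inj_on_subset) auto
    ultimately have "card A = a - b" using card_image by fastforce
    thus ?thesis using ZA by (simp add: card_cartesian_product)
  qed
  have card_U: "card (U j) \<le> L" if j: "j < a" for j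
  proof -
    define f where "f = (\<lambda>k. (phi (k div g) j, k mod g))"
    have "inj_on f (U j)"
    proof (rule inj_onI)
      fix k1 k2 assume k: "k1 \<in> U j" "k2 \<in> U j" "f k1 = f k2"
      have "k1 div g = k2 div g"
        using phi_inj_r[of "k1 div g" a "k2 div g" j] divlt k unfolding U_def f_def phi_def by auto
      moreover have "k1 mod g = k2 mod g" using k(3) unfolding f_def by simp
      ultimately show "k1 = k2" by (metis div_mult_mod_eq)
    qed
    moreover have "f ` U j \<subseteq> {..<b} \<times> {..<g}" unfolding f_def U_def mem_def using gpos by auto
    ultimately have "card (U j) \<le> card ({..<b} \<times> {..<g})"
      by (intro card_inj_on_le) auto
    thus ?thesis using Lb by (simp add: card_cartesian_product mult.commute)
  qed
  have valid: "valid_placement K N M a Z"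
    unfolding valid_placement_def
  proof (intro allI impI conjI)
    fix k assume k: "k < K"
    show "Z k \<subseteq> {..<N} \<times> {..<a}" unfolding Z_def by auto
    show "real (card (Z k)) \<le> M * real a" using card_Z[OF k] Ma by simp
  qed
  have deliver: "\<exists>S' V. real S' / real a = real L / real K \<and> decodes K L N a Z h d S' V"
    if gen: "chan_generic K L h" and dN: "\<forall>k<K. d k < N" for h d
  proof -
    define V where "V = (\<lambda>(\<tau>::nat) (nj::nat\<times>nat). SOME v. \<forall>k\<in>U (snd nj).
        (\<Sum>i<L. h k i * v i) = (if fst nj = d k \<and> \<tau> = phi (k div g) (snd nj) then 1 else 0))"
    have Vprop: "(\<Sum>i<L. h k i * V \<tau> (n,j) i) = (if n = d k \<and> \<tau> = phi (k div g) j then 1 else 0)"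
      if j: "j < a" and k: "k \<in> U j" for \<tau> n j k
    proof -
      have "\<exists>v. \<forall>k\<in>U j. (\<Sum>i<L. h k i * v i) = (if n = d k \<and> \<tau> = phi (k div g) j then 1 else 0)"
        by (rule gen_solve[OF gen _ card_U[OF j] LK]) (auto simp: U_def)
      from someI_ex[OF this] show ?thesis using k unfolding V_def by auto
    qed
    have "decodes K L N a Z h d b V"
      unfolding decodes_def
    proof (intro allI impI)
      fix k j assume k: "k < K" and j: "j < a" and nz: "(d k, j) \<notin> Z k"
      have mj: "mem j k" using nz dN k j unfolding Z_def by auto
      define c where "c = (\<lambda>\<tau>. if \<tau> = phi (k div g) j then (1::complex) else 0)"
      show "\<exists>c. \<forall>n<N. \<forall>j'<a. (n, j') \<notin> Z k \<longrightarrow>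
           (\<Sum>\<tau><b. c \<tau> * (\<Sum>i<L. h k i * V \<tau> (n, j') i)) = (if n = d k \<and> j' = j then 1 else 0)"
      proof (intro exI[of _ c] allI impI)
        fix n j' assume n: "n < N" and j': "j' < a" and nz': "(n, j') \<notin> Z k"
        have kU: "k \<in> U j'" using nz' n j' k unfolding Z_def U_def by auto
        have "(\<Sum>\<tau><b. c \<tau> * (\<Sum>i<L. h k i * V \<tau> (n, j') i))
            = (\<Sum>\<tau><b. if \<tau> = phi (k div g) j then (if n = d k \<and> \<tau> = phi (k div g) j' then 1 else 0) else 0)"
          by (intro sum.cong refl) (simp add: c_def Vprop[OF j' kU])
        also have "\<dots> = (if n = d k \<and> phi (k div g) j = phi (k div g) j' then 1 else 0)"
          using mj unfolding mem_def by (simp add: sum.delta')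
        also have "\<dots> = (if n = d k \<and> j' = j then 1 else 0)"
          using phi_inj_j[OF j j' divlt[OF k]] unfolding phi_def by auto
        finally show "(\<Sum>\<tau><b. c \<tau> * (\<Sum>i<L. h k i * V \<tau> (n, j') i)) = (if n = d k \<and> j' = j then 1 else 0)" .
      qed
    qed
    thus ?thesis using ratio by blast
  qed
  have ach: "achievable_with_subpacketization K L M N a (real L / real K)"
    unfolding achievable_with_subpacketization_def using apos valid deliver by blast
  have F': "nat (int K div gcd (gcd (int K) t) (int L)) = a" using Fa unfolding G_def .
  show ?thesis unfolding F' Tval using ach by blast
qed

end
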